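(* If $E$ is a hereditary approximation space having a countable basis, then $\bigcup_{\alpha<\aleph_1}\mathbf{D}_\alpha(E)=\mathbf{\Delta}^0_2(E)$.
   Context: Approximation relation: a binary relation $\ll$ on a topological basis $\mathcal{B}$ of $E$ such that for all $U,V,T\in\mathcal{B}$: (1) $U\ll V\Rightarrow V\subseteq U$; (2) $U\subseteq T$ and $U\ll V$ imply $T\ll V$; (3) for every $x\in U$ there is $W\in\mathcal{B}$ with $x\in W$ and $U\ll W$; (4) every sequence $(U_i)$ in $\mathcal{B}$ with $U_i\ll U_{i+1}$ for all $i$ has $\bigcap_iU_i\ne\emptyset$. Hereditary: for every closed $C\subseteq E$, the relation $\ll_C$ on $\{C\cap U:U\in\mathcal{B},C\cap U\ne\emptyset\}$, given by $P\ll_C Q$ iff $P=C\cap U$, $Q=C\cap V$ for some $U,V\in\mathcal{B}$ with $U\ll V$, is an approximation relation for the subspace $C$. A hereditary approximation space is one admitting a hereditary approximation relation. $\mathbf{\Sigma}^0_2(E)$: countable unions of differences $U\setminus V$ of open sets; $\mathbf{\Pi}^0_2(E)$: complements; $\mathbf{\Delta}^0_2(E)$: their intersection. Parity: ordinal $\lambda+n$ ($\lambda$ zero or limit, $n<\omega$) has the parity of $n$; $\alpha\sim\beta$ means same parity. $D_\alpha((A_\beta)_{\beta<\alpha})=\bigcup_{\beta<\alpha,\beta\not\sim\alpha}(A_\beta\setminus\bigcup_{\gamma<\beta}A_\gamma)$, and $\mathbf{D}_\alpha(E)$ is the class of such sets with all $A_\beta$ open. *)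

theory Defs
  imports "HOL-Analysis.Analysis"
begin

definition is_basis :: "'a topology \<Rightarrow> 'a set set \<Rightarrow> bool" where
  "is_basis E B \<longleftrightarrow> (\<forall>U\<in>B. openin E U) \<and>
     (\<forall>U. openin E U \<longrightarrow> (\<exists>F. F \<subseteq> B \<and> \<Union>F = U))"

definition has_countable_basis :: "'a topology \<Rightarrow> bool" where
  "has_countable_basis E \<longleftrightarrow> (\<exists>B. countable B \<and> is_basis E B)"

definition approx_rel :: "'a topology \<Rightarrow> 'a set set \<Rightarrow> ('a set \<Rightarrow> 'a set \<Rightarrow> bool) \<Rightarrow> bool" where
  "approx_rel E B R \<longleftrightarrow> is_basis E B \<and>
     (\<forall>U\<in>B. \<forall>V\<in>B. R U V \<longrightarrow> V \<subseteq> U) \<and>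
     (\<forall>U\<in>B. \<forall>V\<in>B. \<forall>T\<in>B. U \<subseteq> T \<and> R U V \<longrightarrow> R T V) \<and>
     (\<forall>U\<in>B. \<forall>x\<in>U. \<exists>W\<in>B. x \<in> W \<and> R U W) \<and>
     (\<forall>S :: nat \<Rightarrow> 'a set. (\<forall>i. S i \<in> B) \<and> (\<forall>i. R (S i) (S (Suc i)))
        \<longrightarrow> (\<Inter>i. S i) \<noteq> {})"

definition trace_basis :: "'a set \<Rightarrow> 'a set set \<Rightarrow> 'a set set" where
  "trace_basis C B = {C \<inter> U | U. U \<in> B \<and> C \<inter> U \<noteq> {}}"

definition trace_rel :: "'a set \<Rightarrow> 'a set set \<Rightarrow> ('a set \<Rightarrow> 'a set \<Rightarrow> bool)
    \<Rightarrow> 'a set \<Rightarrow> 'a set \<Rightarrow> bool" where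
  "trace_rel C B R P Q \<longleftrightarrow> (\<exists>U\<in>B. \<exists>V\<in>B. P = C \<inter> U \<and> Q = C \<inter> V \<and> R U V)"

definition hereditary_approx_rel :: "'a topology \<Rightarrow> 'a set set \<Rightarrow> ('a set \<Rightarrow> 'a set \<Rightarrow> bool) \<Rightarrow> bool" where
  "hereditary_approx_rel E B R \<longleftrightarrow> approx_rel E B R \<and>
     (\<forall>C. closedin E C \<longrightarrow>
        approx_rel (subtopology E C) (trace_basis C B) (trace_rel C B R))"

definition hereditary_approx_space :: "'a topology \<Rightarrow> bool" where
  "hereditary_approx_space E \<longleftrightarrow> (\<exists>B R. hereditary_approx_rel E B R)"

definition sigma02 :: "'a topology \<Rightarrow> 'a set \<Rightarrow> bool" where
  "sigma02 E S \<longleftrightarrow> (\<exists>U V :: nat \<Rightarrow> 'a set. (\<forall>n. openin E (U n) \<and> openin E (V n))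
      \<and> S = (\<Union>n. U n - V n))"

definition pi02 :: "'a topology \<Rightarrow> 'a set \<Rightarrow> bool" where
  "pi02 E S \<longleftrightarrow> S \<subseteq> topspace E \<and> sigma02 E (topspace E - S)"

definition delta02 :: "'a topology \<Rightarrow> 'a set \<Rightarrow> bool" where
  "delta02 E S \<longleftrightarrow> sigma02 E S \<and> pi02 E S"

text \<open>A countable ordinal alpha is represented by a (reflexive, Isabelle-style) well-order r on a
subset of nat having a greatest element tp; the ordinals beta < alpha are the elements strictly
below tp, and tp itself plays the role of alpha (the order type of r is alpha+1).
Every countable ordinal arises this way, and every such r gives a countable ordinal.\<close>

definition strict_below :: "nat rel \<Rightarrow> nat \<Rightarrow> nat \<Rightarrow> bool" where
  "strict_below r x y \<longleftrightarrow> (x, y) \<in> r \<and> x \<noteq> y"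

definition limit_or_zero :: "nat rel \<Rightarrow> nat \<Rightarrow> bool" where
  "limit_or_zero r d \<longleftrightarrow> d \<in> Field r \<and>
     \<not> (\<exists>g. strict_below r g d \<and> \<not> (\<exists>e. strict_below r g e \<and> strict_below r e d))"

text \<open>For b = lambda + n (lambda zero or limit), the finite part n is the number of g with
lambda \<le> g < b, i.e. of g < b such that no zero-or-limit element lies in (g, b].\<close>
definition finite_part :: "nat rel \<Rightarrow> nat \<Rightarrow> nat" where
  "finite_part r b = card {g. strict_below r g b \<and>
      (\<forall>d. strict_below r g d \<and> (d, b) \<in> r \<longrightarrow> \<not> limit_or_zero r d)}"

definition same_parity :: "nat rel \<Rightarrow> nat \<Rightarrow> nat \<Rightarrow> bool" where
  "same_parity r a b \<longleftrightarrow> (even (finite_part r a) \<longleftrightarrow> even (finite_part r b))"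

definition countable_ordinal_code :: "nat rel \<Rightarrow> nat \<Rightarrow> bool" where
  "countable_ordinal_code r tp \<longleftrightarrow> Well_order r \<and> tp \<in> Field r \<and>
     (\<forall>x\<in>Field r. (x, tp) \<in> r)"

definition D_op :: "nat rel \<Rightarrow> nat \<Rightarrow> (nat \<Rightarrow> 'a set) \<Rightarrow> 'a set" where
  "D_op r tp A = (\<Union>b \<in> {b. strict_below r b tp \<and> \<not> same_parity r b tp}.
       A b - (\<Union>g \<in> {g. strict_below r g b}. A g))"

definition D_class :: "'a topology \<Rightarrow> nat rel \<Rightarrow> nat \<Rightarrow> 'a set set" where
  "D_class E r tp = {D_op r tp A | A. \<forall>b. strict_below r b tp \<longrightarrow> openin E (A b)}"

definition D_countable_union :: "'a topology \<Rightarrow> 'a set set" where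
  "D_countable_union E = (\<Union>{D_class E r tp | r tp. countable_ordinal_code r tp})"

end

theory Submission
  imports Defs
begin


lemma approx_relD1: "approx_rel E B R \<Longrightarrow> is_basis E B"
  unfolding approx_rel_def by (elim conjE) assumption
lemma approx_relD2: "approx_rel E B R \<Longrightarrow> \<forall>U\<in>B. \<forall>V\<in>B. R U V \<longrightarrow> V \<subseteq> U"
  unfolding approx_rel_def by (elim conjE) assumption
lemma approx_relD3: "approx_rel E B R \<Longrightarrow> \<forall>U\<in>B. \<forall>V\<in>B. \<forall>T\<in>B. U \<subseteq> T \<and> R U V \<longrightarrow> R T V"
  unfolding approx_rel_def by (elim conjE) assumption
lemma approx_relD4: "approx_rel E B R \<Longrightarrow> \<forall>U\<in>B. \<forall>x\<in>U. \<exists>W\<in>B. x \<in> W \<and> R U W"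
  unfolding approx_rel_def by (elim conjE) assumption
lemma approx_relD5: "approx_rel E B R \<Longrightarrow> \<forall>S :: nat \<Rightarrow> 'a set. (\<forall>i. S i \<in> B) \<and> (\<forall>i. R (S i) (S (Suc i)))
        \<longrightarrow> (\<Inter>i. S i) \<noteq> {}"
  unfolding approx_rel_def by (elim conjE) assumption

lemma is_basisD:
  assumes "is_basis E B" "openin E U" "x \<in> U"
  shows "\<exists>W\<in>B. x \<in> W \<and> W \<subseteq> U"
proof -
  from assms(1,2) obtain F where "F \<subseteq> B" "\<Union>F = U" unfolding is_basis_def by meson
  with assms(3) show ?thesis by blast
qed

lemma is_basis_open: "is_basis E B \<Longrightarrow> W \<in> B \<Longrightarrow> openin E W"
  unfolding is_basis_def by blast

lemma approx_refine:
  assumes A: "approx_rel E B R" and P: "P \<in> B" and Z: "openin E Z" "x \<in> Z" "Z \<subseteq> P"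
  shows "\<exists>W\<in>B. x \<in> W \<and> W \<subseteq> Z \<and> R P W"
proof -
  from A have bas: "is_basis E B" and r1: "\<forall>U\<in>B. \<forall>V\<in>B. R U V \<longrightarrow> V \<subseteq> U"
    and r2: "\<forall>U\<in>B. \<forall>V\<in>B. \<forall>T\<in>B. U \<subseteq> T \<and> R U V \<longrightarrow> R T V"
    and r3: "\<forall>U\<in>B. \<forall>x\<in>U. \<exists>W\<in>B. x \<in> W \<and> R U W"
    by (rule approx_relD1 approx_relD2 approx_relD3 approx_relD4 approx_relD5)+
  from is_basisD[OF bas Z(1,2)] obtain W2 where W2: "W2 \<in> B" "x \<in> W2" "W2 \<subseteq> Z" by blast
  from r3 W2 obtain W3 where W3: "W3 \<in> B" "x \<in> W3" "R W2 W3" by blast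
  have "W3 \<subseteq> W2" using r1 W2 W3 by blast
  moreover have "R P W3" using r2 W2 W3 P Z by blast
  ultimately show ?thesis using W3 W2 by blast
qed

lemma approx_baire:
  fixes Ok Q :: "nat \<Rightarrow> 'a set"
  assumes A: "approx_rel E B R" and ne: "topspace E \<noteq> {}"
    and op: "\<And>k. openin E (Ok k) \<and> openin E (Q k)"
    and cov: "topspace E \<subseteq> (\<Union>k. Ok k - Q k)"
  shows "\<exists>k W. openin E W \<and> W \<noteq> {} \<and> W \<subseteq> Ok k - Q k"
proof (rule ccontr)
  assume H: "\<not> ?thesis"
  from A have bas: "is_basis E B" and r1: "\<forall>U\<in>B. \<forall>V\<in>B. R U V \<longrightarrow> V \<subseteq> U"
    and r4: "\<forall>S :: nat \<Rightarrow> 'a set. (\<forall>i. S i \<in> B) \<and> (\<forall>i. R (S i) (S (Suc i)))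
        \<longrightarrow> (\<Inter>i. S i) \<noteq> {}"
    by (rule approx_relD1 approx_relD2 approx_relD3 approx_relD4 approx_relD5)+
  have bo: "\<And>U. U \<in> B \<Longrightarrow> openin E U" using bas is_basis_open by blast
  define Z where "Z k P = (if P \<inter> Ok k = {} then P else P \<inter> Ok k \<inter> Q k)" for k P
  have Zp: "openin E (Z k P) \<and> Z k P \<noteq> {} \<and> Z k P \<subseteq> P \<and> Z k P \<inter> (Ok k - Q k) = {}"
    if "P \<in> B" "P \<noteq> {}" for k P
  proof (cases "P \<inter> Ok k = {}")
    case True then show ?thesis using that bo[OF that(1)] unfolding Z_def by auto
  next
    case False
    have "openin E (P \<inter> Ok k)" using bo[OF that(1)] op by blast
    with H False have "\<not> P \<inter> Ok k \<subseteq> Ok k - Q k" by blast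
    then have "P \<inter> Ok k \<inter> Q k \<noteq> {}" by blast
    moreover have "openin E (P \<inter> Ok k \<inter> Q k)" using bo[OF that(1)] op by blast
    ultimately show ?thesis using False unfolding Z_def by auto
  qed
  have step: "\<exists>W. W \<in> B \<and> W \<noteq> {} \<and> W \<subseteq> Z k P \<and> R P W" if "P \<in> B" "P \<noteq> {}" for k P
  proof -
    from Zp[OF that, of k] obtain x where "x \<in> Z k P" by blast
    with approx_refine[OF A that(1), of "Z k P" x] Zp[OF that, of k] show ?thesis by blast
  qed
  from ne obtain x0 where "x0 \<in> topspace E" by blast
  with is_basisD[OF bas, of "topspace E" x0] obtain P0 where P0: "P0 \<in> B" "P0 \<noteq> {}" by auto
  define P where "P = rec_nat P0 (\<lambda>k p. SOME W. W \<in> B \<and> W \<noteq> {} \<and> W \<subseteq> Z k p \<and> R p W)"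
  have P0': "P 0 = P0" unfolding P_def by simp
  have PS: "P (Suc k) = (SOME W. W \<in> B \<and> W \<noteq> {} \<and> W \<subseteq> Z k (P k) \<and> R (P k) W)" for k
    unfolding P_def by simp
  have nxt: "P (Suc k) \<in> B \<and> P (Suc k) \<noteq> {} \<and> P (Suc k) \<subseteq> Z k (P k) \<and> R (P k) (P (Suc k))"
    if "P k \<in> B" "P k \<noteq> {}" for k
    unfolding PS by (rule someI_ex[OF step[OF that]])
  have inv: "P k \<in> B \<and> P k \<noteq> {}" for k
  proof (induction k)
    case 0 then show ?case using P0 P0' by simp
  next
    case (Suc k)
    then show ?case using nxt[of k] by simp
  qed
  have stp: "P (Suc k) \<subseteq> Z k (P k) \<and> R (P k) (P (Suc k))" for k
    using nxt[of k] inv[of k] by simp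
  have "(\<Inter>i. P i) \<noteq> {}" using inv stp by (intro r4[rule_format]) auto
  then obtain x where x: "\<And>i. x \<in> P i" by blast
  have "x \<in> topspace E" using x[of 0] bo[OF inv[THEN conjunct1, of 0]] openin_subset by blast
  with cov obtain k where "x \<in> Ok k - Q k" by blast
  moreover have "x \<in> Z k (P k)" using x[of "Suc k"] stp by blast
  ultimately show False using Zp[OF inv[THEN conjunct1] inv[THEN conjunct2], of k k] by blast
qed



lemma sigma02_UN:
  fixes I :: "nat set"
  assumes "\<And>n. n \<in> I \<Longrightarrow> openin E (U n) \<and> openin E (V n)"
  shows "sigma02 E (\<Union>n\<in>I. U n - V n)"
proof -
  define U' where "U' n = (if n \<in> I then U n else {})" for n
  define V' where "V' n = (if n \<in> I then V n else {})" for n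
  have "(\<Union>n\<in>I. U n - V n) = (\<Union>n. U' n - V' n)" unfolding U'_def V'_def by (auto split: if_splits)
  moreover have "\<forall>n. openin E (U' n) \<and> openin E (V' n)" unfolding U'_def V'_def using assms by auto
  ultimately show ?thesis unfolding sigma02_def by blast
qed

lemma sigma02_Un:
  assumes "sigma02 E S" "sigma02 E T" shows "sigma02 E (S \<union> T)"
proof -
  from assms(1) obtain U1 V1 :: "nat \<Rightarrow> 'a set" where 1: "\<forall>n. openin E (U1 n) \<and> openin E (V1 n)" "S = (\<Union>n. U1 n - V1 n)"
    unfolding sigma02_def by blast
  from assms(2) obtain U2 V2 :: "nat \<Rightarrow> 'a set" where 2: "\<forall>n. openin E (U2 n) \<and> openin E (V2 n)" "T = (\<Union>n. U2 n - V2 n)"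
    unfolding sigma02_def by blast
  define U where "U n = (if even n then U1 (n div 2) else U2 (n div 2))" for n :: nat
  define V where "V n = (if even n then V1 (n div 2) else V2 (n div 2))" for n :: nat
  have "S \<union> T = (\<Union>n. U n - V n)"
  proof
    show "S \<union> T \<subseteq> (\<Union>n. U n - V n)"
    proof
      fix x assume "x \<in> S \<union> T"
      then show "x \<in> (\<Union>n. U n - V n)"
      proof
        assume "x \<in> S" then obtain n where "x \<in> U1 n - V1 n" using 1 by blast
        then have "x \<in> U (2*n) - V (2*n)" unfolding U_def V_def by simp
        then show ?thesis by blast
      next
        assume "x \<in> T" then obtain n where "x \<in> U2 n - V2 n" using 2 by blast
        then have "x \<in> U (2*n+1) - V (2*n+1)" unfolding U_def V_def by simp
        then show ?thesis by blast
      qed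
    qed
    show "(\<Union>n. U n - V n) \<subseteq> S \<union> T"
      unfolding U_def V_def 1 2 by (auto split: if_splits)
  qed
  moreover have "\<forall>n. openin E (U n) \<and> openin E (V n)" unfolding U_def V_def using 1 2 by auto
  ultimately show ?thesis unfolding sigma02_def by blast
qed

lemma sigma02_diff: "openin E U \<Longrightarrow> openin E V \<Longrightarrow> sigma02 E (U - V)"
  using sigma02_UN[of "{0}" E "\<lambda>_. U" "\<lambda>_. V"] by simp

lemma wo_trans: "Well_order r \<Longrightarrow> trans r"
  by (simp add: well_order_on_def linear_order_on_def partial_order_on_def preorder_on_def)
lemma wo_antisym: "Well_order r \<Longrightarrow> antisym r"
  by (simp add: well_order_on_def linear_order_on_def partial_order_on_def)
lemma wo_total: "Well_order r \<Longrightarrow> total_on (Field r) r"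
  by (simp add: well_order_on_def linear_order_on_def)
lemma wo_wf: "Well_order r \<Longrightarrow> wf (r - Id)"
  by (simp add: well_order_on_def)

lemma sb_trans:
  assumes "Well_order r" "strict_below r g b" "strict_below r b t"
  shows "strict_below r g t"
proof -
  have "(g, t) \<in> r" using assms wo_trans[OF assms(1)] unfolding strict_below_def trans_def by blast
  moreover have "g \<noteq> t"
  proof
    assume "g = t"
    then have "(b, g) \<in> r" "(g, b) \<in> r" using assms unfolding strict_below_def by auto
    then have "b = g" using wo_antisym[OF assms(1)] unfolding antisym_def by blast
    then show False using assms unfolding strict_below_def by simp
  qed
  ultimately show ?thesis unfolding strict_below_def by simp
qed

lemma D_delta02:
  assumes wo: "Well_order r" and tpF: "tp \<in> Field r"
    and A: "\<And>b. strict_below r b tp \<Longrightarrow> openin E (A b)"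
  shows "delta02 E (D_op r tp A)"
proof -
  define W where "W b = (\<Union>g \<in> {g. strict_below r g b}. A g)" for b
  define I where "I = {b. strict_below r b tp \<and> \<not> same_parity r b tp}"
  define J where "J = {b. strict_below r b tp \<and> same_parity r b tp}"
  have Wo: "openin E (W b)" if "strict_below r b tp" for b
    unfolding W_def using A sb_trans[OF wo _ that] by (intro openin_Union) auto
  have D: "D_op r tp A = (\<Union>b\<in>I. A b - W b)" unfolding D_op_def I_def W_def by simp
  have s1: "sigma02 E (D_op r tp A)" unfolding D using A Wo unfolding I_def
    by (intro sigma02_UN) auto
  define X where "X = topspace E"
  define UA where "UA = (\<Union>b \<in> {b. strict_below r b tp}. A b)"
  have UAo: "openin E UA" unfolding UA_def using A by (intro openin_Union) auto
  have DU: "D_op r tp A \<subseteq> UA" unfolding D UA_def I_def by blast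
  have UAX: "UA \<subseteq> X" using UAo openin_subset unfolding X_def by blast
  have comp: "X - D_op r tp A = (X - UA) \<union> (\<Union>b\<in>J. A b - W b)"
  proof
    show "X - D_op r tp A \<subseteq> (X - UA) \<union> (\<Union>b\<in>J. A b - W b)"
    proof
      fix x assume x: "x \<in> X - D_op r tp A"
      show "x \<in> (X - UA) \<union> (\<Union>b\<in>J. A b - W b)"
      proof (cases "x \<in> UA")
        case False then show ?thesis using x by blast
      next
        case True
        define Q where "Q = {b. strict_below r b tp \<and> x \<in> A b}"
        from True obtain b0 where "b0 \<in> Q" unfolding UA_def Q_def by blast
        then obtain b where b: "b \<in> Q" and bmin: "\<forall>y. (y, b) \<in> r - Id \<longrightarrow> y \<notin> Q"
          using wo_wf[OF wo] unfolding wf_eq_minimal by metis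
        have "x \<notin> W b"
        proof
          assume "x \<in> W b"
          then obtain g where g: "strict_below r g b" "x \<in> A g" unfolding W_def by blast
          have "strict_below r g tp" using sb_trans[OF wo g(1)] b unfolding Q_def by blast
          then have "g \<in> Q" using g unfolding Q_def by blast
          moreover have "(g, b) \<in> r - Id" using g unfolding strict_below_def by simp
          ultimately show False using bmin by blast
        qed
        then have xb: "x \<in> A b - W b" using b unfolding Q_def by blast
        show ?thesis
        proof (cases "same_parity r b tp")
          case True then show ?thesis using xb b unfolding J_def Q_def by blast
        next
          case False
          then have "b \<in> I" using b unfolding I_def Q_def by blast
          then have "x \<in> D_op r tp A" using xb unfolding D by blast
          then show ?thesis using x by blast
        qed
      qed
    qed
    show "(X - UA) \<union> (\<Union>b\<in>J. A b - W b) \<subseteq> X - D_op r tp A"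
    proof
      fix x assume x: "x \<in> (X - UA) \<union> (\<Union>b\<in>J. A b - W b)"
      show "x \<in> X - D_op r tp A"
      proof (cases "x \<in> X - UA")
        case True then show ?thesis using DU by blast
      next
        case False
        then obtain b where b: "b \<in> J" "x \<in> A b" "x \<notin> W b" using x by blast
        have "x \<in> X" using b A UAX unfolding J_def UA_def by blast
        moreover have "x \<notin> D_op r tp A"
        proof
          assume "x \<in> D_op r tp A"
          then obtain b' where b': "b' \<in> I" "x \<in> A b'" "x \<notin> W b'" unfolding D by blast
          have ne: "b \<noteq> b'" using b b' unfolding I_def J_def by blast
          have "b \<in> Field r" "b' \<in> Field r" using b(1) b'(1) unfolding I_def J_def strict_below_def
            by (auto intro: FieldI1)
          with wo_total[OF wo] ne have "(b, b') \<in> r \<or> (b', b) \<in> r" unfolding total_on_def by blast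
          then show False
          proof
            assume "(b, b') \<in> r"
            then have "strict_below r b b'" using ne unfolding strict_below_def by simp
            then show False using b b' unfolding W_def by blast
          next
            assume "(b', b) \<in> r"
            then have "strict_below r b' b" using ne unfolding strict_below_def by simp
            then show False using b b' unfolding W_def by blast
          qed
        qed
        ultimately show ?thesis by blast
      qed
    qed
  qed
  have s2: "sigma02 E (X - D_op r tp A)" unfolding comp
  proof (rule sigma02_Un)
    show "sigma02 E (X - UA)" using UAo unfolding X_def by (intro sigma02_diff) auto
    show "sigma02 E (\<Union>b\<in>J. A b - W b)" using A Wo unfolding J_def by (intro sigma02_UN) auto
  qed
  show ?thesis unfolding delta02_def pi02_def using s1 s2 DU UAX unfolding X_def by blast
qed

lemma D_union_sub: "D_countable_union E \<subseteq> {S. delta02 E S}"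
proof
  fix S assume "S \<in> D_countable_union E"
  then obtain r tp A where c: "countable_ordinal_code r tp" and A: "\<forall>b. strict_below r b tp \<longrightarrow> openin E (A b)"
    and S: "S = D_op r tp A"
    unfolding D_countable_union_def D_class_def by blast
  from c have "Well_order r" "tp \<in> Field r" unfolding countable_ordinal_code_def by auto
  from D_delta02[OF this, of E A] A S show "S \<in> {S. delta02 E S}" by blast
qed



definition Npos :: "'a topology \<Rightarrow> 'a set \<Rightarrow> 'a set \<Rightarrow> 'a set" where
  "Npos E S G = \<Union>{U. openin E U \<and> (topspace E - G) \<inter> U \<subseteq> S}"
definition Nneg :: "'a topology \<Rightarrow> 'a set \<Rightarrow> 'a set \<Rightarrow> 'a set" where
  "Nneg E S G = \<Union>{U. openin E U \<and> (topspace E - G) \<inter> U \<inter> S = {}}"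
definition nxt :: "'a topology \<Rightarrow> 'a set \<Rightarrow> 'a set \<Rightarrow> 'a set" where
  "nxt E S G = G \<union> Npos E S G \<union> Nneg E S G"

inductive_set tower :: "'a topology \<Rightarrow> 'a set \<Rightarrow> 'a set set" for E S where
  tw_nxt: "G \<in> tower E S \<Longrightarrow> nxt E S G \<in> tower E S"
| tw_Un [unfolded Pow_iff]: "Y \<in> Pow (tower E S) \<Longrightarrow> \<Union>Y \<in> tower E S"

lemma Npos_open: "openin E (Npos E S G)" unfolding Npos_def by (intro openin_Union) auto
lemma Nneg_open: "openin E (Nneg E S G)" unfolding Nneg_def by (intro openin_Union) auto

lemma nxt_sup: "G \<subseteq> nxt E S G" unfolding nxt_def by blast

lemma tower_open: "G \<in> tower E S \<Longrightarrow> openin E G"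
proof (induction rule: tower.induct)
  case (tw_nxt G) then show ?case unfolding nxt_def using Npos_open Nneg_open by blast
next
  case (tw_Un Y) then show ?case by (intro openin_Union) auto
qed

lemma tw_l1:
  assumes G: "G \<in> tower E S" and P: "\<forall>H\<in>tower E S. H \<subset> G \<longrightarrow> nxt E S H \<subseteq> G"
    and H: "H \<in> tower E S"
  shows "H \<subseteq> G \<or> nxt E S G \<subseteq> H"
  using H
proof (induction rule: tower.induct)
  case (tw_nxt H')
  show ?case
  proof (cases "nxt E S G \<subseteq> H'")
    case True then show ?thesis using nxt_sup[of H' E S] by blast
  next
    case False
    then have "H' \<subseteq> G" using tw_nxt.IH by blast
    then show ?thesis
    proof (cases "H' = G")
      case True then show ?thesis by blast
    next
      case False then have "H' \<subset> G" using \<open>H' \<subseteq> G\<close> by blast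
      then show ?thesis using P tw_nxt.hyps by blast
    qed
  qed
next
  case (tw_Un Y)
  show ?case
  proof (cases "\<forall>Z\<in>Y. Z \<subseteq> G")
    case True then show ?thesis by blast
  next
    case False
    then obtain Z where "Z \<in> Y" "\<not> Z \<subseteq> G" by blast
    with tw_Un.IH have "nxt E S G \<subseteq> Z" by blast
    with \<open>Z \<in> Y\<close> show ?thesis by blast
  qed
qed

lemma tw_l2:
  assumes G: "G \<in> tower E S"
  shows "\<forall>H\<in>tower E S. H \<subset> G \<longrightarrow> nxt E S H \<subseteq> G"
  using G
proof (induction rule: tower.induct)
  case (tw_nxt G')
  show ?case
  proof (intro ballI impI)
    fix H assume H: "H \<in> tower E S" "H \<subset> nxt E S G'"
    from tw_l1[OF tw_nxt.hyps tw_nxt.IH H(1)] have "H \<subseteq> G' \<or> nxt E S G' \<subseteq> H" .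
    then have "H \<subseteq> G'" using H(2) by blast
    show "nxt E S H \<subseteq> nxt E S G'"
    proof (cases "H = G'")
      case True then show ?thesis by simp
    next
      case False then have "H \<subset> G'" using \<open>H \<subseteq> G'\<close> by blast
      then have "nxt E S H \<subseteq> G'" using tw_nxt.IH H(1) by blast
      then show ?thesis using nxt_sup[of G' E S] by blast
    qed
  qed
next
  case (tw_Un Y)
  show ?case
  proof (intro ballI impI)
    fix H assume H: "H \<in> tower E S" "H \<subset> \<Union>Y"
    then obtain Z where Z: "Z \<in> Y" "\<not> Z \<subseteq> H" by blast
    have ZT: "Z \<in> tower E S" and PZ: "\<forall>H\<in>tower E S. H \<subset> Z \<longrightarrow> nxt E S H \<subseteq> Z"
      using tw_Un.IH Z(1) by blast+
    from tw_l1[OF ZT PZ H(1)] have "H \<subseteq> Z \<or> nxt E S Z \<subseteq> H" .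
    then have "H \<subseteq> Z" using Z(2) nxt_sup[of Z E S] by blast
    then have "H \<subset> Z" using Z(2) by blast
    then have "nxt E S H \<subseteq> Z" using PZ H(1) by blast
    then show "nxt E S H \<subseteq> \<Union>Y" using Z(1) by blast
  qed
qed

lemma tower_key: "G \<in> tower E S \<Longrightarrow> H \<in> tower E S \<Longrightarrow> H \<subset> G \<Longrightarrow> nxt E S H \<subseteq> G"
  using tw_l2[of G E S] by blast

lemma tower_lin: "G \<in> tower E S \<Longrightarrow> H \<in> tower E S \<Longrightarrow> H \<subseteq> G \<or> G \<subseteq> H"
proof -
  assume a: "G \<in> tower E S" "H \<in> tower E S"
  from tw_l1[OF a(1) tw_l2[OF a(1)] a(2)] have "H \<subseteq> G \<or> nxt E S G \<subseteq> H" .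
  then show ?thesis using nxt_sup[of G E S] by blast
qed



lemma baire_closed:
  assumes H: "hereditary_approx_rel E B R" and D: "delta02 E S"
    and C: "closedin E C" "C \<noteq> {}"
  shows "\<exists>U. openin E U \<and> C \<inter> U \<noteq> {} \<and> (C \<inter> U \<subseteq> S \<or> C \<inter> U \<inter> S = {})"
proof -
  have A: "approx_rel (subtopology E C) (trace_basis C B) (trace_rel C B R)"
    using H C(1) unfolding hereditary_approx_rel_def by simp
  have CX: "C \<subseteq> topspace E" using C(1) closedin_subset by blast
  have ts: "topspace (subtopology E C) = C" using CX by auto
  from D have "sigma02 E S" "sigma02 E (topspace E - S)"
    unfolding delta02_def pi02_def by auto
  then obtain U1 V1 U2 V2 :: "nat \<Rightarrow> 'a set" where
    1: "\<forall>n. openin E (U1 n) \<and> openin E (V1 n)" "S = (\<Union>n. U1 n - V1 n)" and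
    2: "\<forall>n. openin E (U2 n) \<and> openin E (V2 n)" "topspace E - S = (\<Union>n. U2 n - V2 n)"
    unfolding sigma02_def by blast
  define Ok where "Ok k = C \<inter> (if even k then U1 (k div 2) else U2 (k div 2))" for k :: nat
  define Q where "Q k = C \<inter> (if even k then V1 (k div 2) else V2 (k div 2))" for k :: nat
  have op: "openin (subtopology E C) (Ok k) \<and> openin (subtopology E C) (Q k)" for k
  proof -
    have "openin E (if even k then U1 (k div 2) else U2 (k div 2))"
      "openin E (if even k then V1 (k div 2) else V2 (k div 2))" using 1 2 by auto
    then show ?thesis unfolding Ok_def Q_def openin_subtopology by (metis inf_commute)
  qed
  have cov: "topspace (subtopology E C) \<subseteq> (\<Union>k. Ok k - Q k)"
  proof
    fix x assume "x \<in> topspace (subtopology E C)"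
    then have x: "x \<in> C" using ts by simp
    show "x \<in> (\<Union>k. Ok k - Q k)"
    proof (cases "x \<in> S")
      case True
      then obtain n where "x \<in> U1 n - V1 n" using 1 by blast
      then have "x \<in> Ok (2*n) - Q (2*n)" using x unfolding Ok_def Q_def by simp
      then show ?thesis by blast
    next
      case False
      then have "x \<in> topspace E - S" using x CX by blast
      then obtain n where "x \<in> U2 n - V2 n" using 2 by blast
      then have "x \<in> Ok (2*n+1) - Q (2*n+1)" using x unfolding Ok_def Q_def by simp
      then show ?thesis by blast
    qed
  qed
  have ne: "topspace (subtopology E C) \<noteq> {}" using ts C(2) by simp
  from approx_baire[OF A ne op cov] obtain k W where
    W: "openin (subtopology E C) W" "W \<noteq> {}" "W \<subseteq> Ok k - Q k" by blast
  from W(1) obtain T where T: "openin E T" "W = T \<inter> C" unfolding openin_subtopology by blast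
  have "C \<inter> T \<subseteq> S \<or> C \<inter> T \<inter> S = {}"
  proof (cases "even k")
    case True
    then have "W \<subseteq> U1 (k div 2) - V1 (k div 2)" using W(3) unfolding Ok_def Q_def by auto
    then have "W \<subseteq> S" using 1 by blast
    then show ?thesis using T by blast
  next
    case False
    then have "W \<subseteq> U2 (k div 2) - V2 (k div 2)" using W(3) unfolding Ok_def Q_def by auto
    then have "W \<subseteq> topspace E - S" using 2 by blast
    then show ?thesis using T by blast
  qed
  moreover have "C \<inter> T \<noteq> {}" using T W(2) by blast
  ultimately show ?thesis using T(1) by blast
qed

definition BP :: "'a topology \<Rightarrow> 'a set \<Rightarrow> bool" where
  "BP E S \<longleftrightarrow> (\<forall>C. closedin E C \<and> C \<noteq> {} \<longrightarrow>
     (\<exists>U. openin E U \<and> C \<inter> U \<noteq> {} \<and> (C \<inter> U \<subseteq> S \<or> C \<inter> U \<inter> S = {})))"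

lemma BP_intro:
  assumes "hereditary_approx_rel E B R" "delta02 E S" shows "BP E S"
  unfolding BP_def
proof (intro allI impI)
  fix C assume "closedin E C \<and> C \<noteq> {}"
  then show "\<exists>U. openin E U \<and> C \<inter> U \<noteq> {} \<and> (C \<inter> U \<subseteq> S \<or> C \<inter> U \<inter> S = {})"
    using baire_closed[OF assms] by simp
qed

lemma nxt_fix:
  assumes bp: "BP E S" and G: "openin E G" "nxt E S G = G"
  shows "topspace E \<subseteq> G"
proof (rule ccontr)
  assume "\<not> topspace E \<subseteq> G"
  then have ne: "topspace E - G \<noteq> {}" by blast
  have cl: "closedin E (topspace E - G)" using G(1) by (intro closedin_diff) auto
  from bp cl ne obtain U where U: "openin E U" "(topspace E - G) \<inter> U \<noteq> {}"
    "(topspace E - G) \<inter> U \<subseteq> S \<or> (topspace E - G) \<inter> U \<inter> S = {}"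
    unfolding BP_def by blast
  have "U \<subseteq> Npos E S G \<union> Nneg E S G"
    using U(3)
  proof
    assume "(topspace E - G) \<inter> U \<subseteq> S"
    then have "U \<in> {U. openin E U \<and> (topspace E - G) \<inter> U \<subseteq> S}" using U(1) by blast
    then show ?thesis unfolding Npos_def by blast
  next
    assume "(topspace E - G) \<inter> U \<inter> S = {}"
    then have "U \<in> {U. openin E U \<and> (topspace E - G) \<inter> U \<inter> S = {}}" using U(1) by blast
    then show ?thesis unfolding Nneg_def by blast
  qed
  then have "U \<subseteq> G" using G(2) unfolding nxt_def by blast
  then show False using U(2) by blast
qed

lemma tower_top:
  assumes bp: "BP E S" shows "topspace E \<in> tower E S"
proof -
  define M where "M = \<Union>(tower E S)"
  have M: "M \<in> tower E S" unfolding M_def by (rule tw_Un) simp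
  then have "nxt E S M \<in> tower E S" by (rule tw_nxt)
  then have "nxt E S M \<subseteq> M" unfolding M_def by blast
  then have "nxt E S M = M" using nxt_sup[of M E S] by blast
  from nxt_fix[OF bp tower_open[OF M] this] have "topspace E \<subseteq> M" .
  moreover have "M \<subseteq> topspace E" using tower_open[OF M] openin_subset by blast
  ultimately show ?thesis using M by simp
qed

lemma tower_least:
  assumes bp: "BP E S" and Y: "\<Y> \<subseteq> tower E S" "\<Y> \<noteq> {}"
  shows "\<exists>H\<in>\<Y>. \<forall>Y\<in>\<Y>. H \<subseteq> Y"
proof (rule ccontr)
  assume nh: "\<not> ?thesis"
  define L where "L = {G \<in> tower E S. \<forall>Y\<in>\<Y>. G \<subseteq> Y}"
  define H where "H = \<Union>L"
  have HT: "H \<in> tower E S" unfolding H_def L_def by (rule tw_Un) blast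
  have HY: "\<forall>Y\<in>\<Y>. H \<subseteq> Y" unfolding H_def L_def by blast
  then have "H \<notin> \<Y>" using nh by blast
  then have "\<forall>Y\<in>\<Y>. H \<subset> Y" using HY by blast
  then have "\<forall>Y\<in>\<Y>. nxt E S H \<subseteq> Y" using tower_key[OF _ HT] Y(1) by blast
  moreover have "nxt E S H \<in> tower E S" using HT by (rule tw_nxt)
  ultimately have "nxt E S H \<in> L" unfolding L_def by blast
  then have "nxt E S H \<subseteq> H" unfolding H_def by blast
  then have "nxt E S H = H" using nxt_sup[of H E S] by blast
  from nxt_fix[OF bp tower_open[OF HT] this] have top: "topspace E \<subseteq> H" .
  from Y(2) obtain Y0 where Y0: "Y0 \<in> \<Y>" by blast
  then have "Y0 \<subseteq> topspace E" using Y(1) tower_open openin_subset by blast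
  then have "Y0 = H" using top HY Y0 by blast
  then show False using \<open>H \<notin> \<Y>\<close> Y0 by blast
qed

lemma tower_countable:
  assumes bp: "BP E S" and cb: "has_countable_basis E"
  shows "countable (tower E S)"
proof -
  from cb obtain B0 where B0: "countable B0" "is_basis E B0" unfolding has_countable_basis_def by blast
  define T0 where "T0 = tower E S - {topspace E}"
  have ex: "\<exists>b. b \<in> B0 \<and> b \<subseteq> nxt E S G \<and> \<not> b \<subseteq> G" if G: "G \<in> T0" for G
  proof -
    have GT: "G \<in> tower E S" and "G \<noteq> topspace E" using G unfolding T0_def by auto
    moreover have "G \<subseteq> topspace E" using tower_open[OF GT] openin_subset by blast
    ultimately have "\<not> topspace E \<subseteq> G" by blast
    then have "nxt E S G \<noteq> G" using nxt_fix[OF bp tower_open[OF GT]] by blast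
    then obtain p where p: "p \<in> nxt E S G" "p \<notin> G" using nxt_sup[of G E S] by blast
    have "openin E (nxt E S G)" using tower_open[OF tw_nxt[OF GT]] .
    from is_basisD[OF B0(2) this p(1)] obtain b where "b \<in> B0" "p \<in> b" "b \<subseteq> nxt E S G" by blast
    then show ?thesis using p(2) by blast
  qed
  define phi where "phi G = (SOME b. b \<in> B0 \<and> b \<subseteq> nxt E S G \<and> \<not> b \<subseteq> G)" for G
  have phi: "phi G \<in> B0 \<and> phi G \<subseteq> nxt E S G \<and> \<not> phi G \<subseteq> G" if "G \<in> T0" for G
    unfolding phi_def by (rule someI_ex[OF ex[OF that]])
  have inj: "inj_on phi T0"
  proof (rule inj_onI)
    fix G1 G2 assume G: "G1 \<in> T0" "G2 \<in> T0" "phi G1 = phi G2"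
    have T: "G1 \<in> tower E S" "G2 \<in> tower E S" using G unfolding T0_def by auto
    show "G1 = G2"
    proof (rule ccontr)
      assume ne: "G1 \<noteq> G2"
      from tower_lin[OF T] have "G2 \<subset> G1 \<or> G1 \<subset> G2" using ne by blast
      then show False
      proof
        assume "G2 \<subset> G1"
        then have "nxt E S G2 \<subseteq> G1" using tower_key[OF T(1) T(2)] by blast
        then show False using phi[OF G(1)] phi[OF G(2)] G(3) by blast
      next
        assume "G1 \<subset> G2"
        then have "nxt E S G1 \<subseteq> G2" using tower_key[OF T(2) T(1)] by blast
        then show False using phi[OF G(1)] phi[OF G(2)] G(3) by blast
      qed
    qed
  qed
  have "phi ` T0 \<subseteq> B0" using phi by blast
  then have "countable (phi ` T0)" using B0(1) countable_subset by blast
  then have "countable T0" using countable_image_inj_on inj by blast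
  then have "countable (insert (topspace E) T0)" by simp
  moreover have "tower E S \<subseteq> insert (topspace E) T0" unfolding T0_def by blast
  ultimately show ?thesis using countable_subset by blast
qed



fun lexle :: "('a set \<times> nat) option \<Rightarrow> ('a set \<times> nat) option \<Rightarrow> bool" where
  "lexle x None = True"
| "lexle None (Some y) = False"
| "lexle (Some (G, n)) (Some (H, m)) = (G \<subset> H \<or> (G = H \<and> n \<le> m))"

definition Dom :: "'a set set \<Rightarrow> ('a set \<times> nat) option set" where
  "Dom T = insert None {Some (G, n) | G n. G \<in> T}"

definition LL :: "'a set set \<Rightarrow> (('a set \<times> nat) option) rel" where
  "LL T = {(x, y). x \<in> Dom T \<and> y \<in> Dom T \<and> lexle x y}"

lemma lexle_refl: "lexle x x"
  by (cases x) auto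

lemma lexle_trans: "lexle x y \<Longrightarrow> lexle y z \<Longrightarrow> lexle x z"
proof (cases x; cases y; cases z)
  fix a b c assume "x = Some a" "y = Some b" "z = Some c" "lexle x y" "lexle y z"
  then show "lexle x z"
    by (cases a; cases b; cases c) (simp, metis order.strict_trans order.strict_trans1 order.strict_trans2 le_trans)
qed auto

lemma lexle_antisym: "lexle x y \<Longrightarrow> lexle y x \<Longrightarrow> x = y"
  by (cases x; cases y) auto

lemma Field_LL: "Field (LL T) = Dom T"
  unfolding Field_def LL_def using lexle_refl by auto

lemma Dom_cases: "x \<in> Dom T \<Longrightarrow> x = None \<or> (\<exists>G n. G \<in> T \<and> x = Some (G, n))"
  unfolding Dom_def by auto

lemma LL_wo:
  assumes lin: "\<And>G H. G \<in> T \<Longrightarrow> H \<in> T \<Longrightarrow> G \<subseteq> H \<or> H \<subseteq> G"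
    and least: "\<And>Y. Y \<subseteq> T \<Longrightarrow> Y \<noteq> {} \<Longrightarrow> \<exists>H\<in>Y. \<forall>Z\<in>Y. H \<subseteq> Z"
  shows "Well_order (LL T)"
  unfolding Field_LL well_order_on_def linear_order_on_def partial_order_on_def preorder_on_def
proof (intro conjI)
  show "LL T \<subseteq> Dom T \<times> Dom T" unfolding LL_def by auto
  show "refl_on (Dom T) (LL T)" unfolding refl_on_def LL_def using lexle_refl by auto
  show "trans (LL T)" unfolding trans_def LL_def using lexle_trans by blast
  show "antisym (LL T)" unfolding antisym_def LL_def using lexle_antisym by blast
  show "total_on (Dom T) (LL T)" unfolding total_on_def LL_def
  proof (intro ballI impI)
    fix x y assume xy: "x \<in> Dom T" "y \<in> Dom T" "x \<noteq> y"
    show "(x, y) \<in> {(x, y). x \<in> Dom T \<and> y \<in> Dom T \<and> lexle x y} \<or>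
          (y, x) \<in> {(x, y). x \<in> Dom T \<and> y \<in> Dom T \<and> lexle x y}"
    proof (cases x)
      case None then show ?thesis using xy by auto
    next
      case (Some a)
      then obtain G n where x: "x = Some (G, n)" "G \<in> T" using xy(1) Dom_cases by blast
      show ?thesis
      proof (cases y)
        case None then show ?thesis using xy by auto
      next
        case (Some b)
        then obtain H m where y: "y = Some (H, m)" "H \<in> T" using xy(2) Dom_cases by blast
        have "G \<subseteq> H \<or> H \<subseteq> G" using lin x(2) y(2) by blast
        then have "lexle x y \<or> lexle y x" unfolding x y by auto
        then show ?thesis using xy by auto
      qed
    qed
  qed
  show "wf (LL T - Id)"
  proof (rule wfI_min)
    fix x and Q :: "('a set \<times> nat) option set" assume xQ: "x \<in> Q"
    show "\<exists>z\<in>Q. \<forall>y. (y, z) \<in> LL T - Id \<longrightarrow> y \<notin> Q"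
    proof (cases "Q \<subseteq> Dom T")
      case False
      then obtain z where "z \<in> Q" "z \<notin> Dom T" by blast
      then show ?thesis unfolding LL_def by blast
    next
      case QD: True
      show ?thesis
      proof (cases "\<exists>G n. Some (G, n) \<in> Q")
        case False
        have "Q \<subseteq> {None}"
        proof
          fix q assume "q \<in> Q"
          then have "q = None \<or> (\<exists>G n. G \<in> T \<and> q = Some (G, n))" using QD Dom_cases by blast
          then show "q \<in> {None}" using False \<open>q \<in> Q\<close> by blast
        qed
        then have "Q = {None}" using xQ by blast
        then show ?thesis by auto
      next
        case True
        define Y where "Y = {G. \<exists>n. Some (G, n) \<in> Q}"
        have Y: "Y \<subseteq> T" "Y \<noteq> {}" using True QD unfolding Y_def Dom_def by auto
        from least[OF Y] obtain G0 where G0: "G0 \<in> Y" "\<forall>Z\<in>Y. G0 \<subseteq> Z" by blast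
        define n0 where "n0 = (LEAST n. Some (G0, n) \<in> Q)"
        from G0(1) obtain n1 where "Some (G0, n1) \<in> Q" unfolding Y_def by blast
        then have n0: "Some (G0, n0) \<in> Q" unfolding n0_def by (rule LeastI)
        have n0l: "Some (G0, m) \<in> Q \<Longrightarrow> n0 \<le> m" for m unfolding n0_def by (rule Least_le)
        show ?thesis
        proof (intro bexI[OF _ n0] allI impI)
          fix y assume yl: "(y, Some (G0, n0)) \<in> LL T - Id"
          show "y \<notin> Q"
          proof
            assume yQ: "y \<in> Q"
            have yl2: "lexle y (Some (G0, n0))" "y \<noteq> Some (G0, n0)" using yl unfolding LL_def by auto
            have "y \<noteq> None" using yl2(1) by (cases y) auto
            then obtain H m where y: "y = Some (H, m)" by (metis not_None_eq surj_pair)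
            have "H \<in> Y" using yQ y unfolding Y_def by blast
            then have "G0 \<subseteq> H" using G0 by blast
            then have "\<not> H \<subset> G0" by blast
            then have "H = G0 \<and> m \<le> n0" using yl2(1) unfolding y by simp
            then have "H = G0" "m < n0" using yl2(2) y by auto
            then show False using n0l[of m] yQ y by simp
          qed
        qed
      qed
    qed
  qed
qed



locale enc =
  fixes T :: "'a set set" and f :: "('a set \<times> nat) option \<Rightarrow> nat"
  assumes inj: "inj_on f (Dom T)"
begin

definition rr where "rr = dir_image (LL T) f"

lemma Field_rr: "Field rr = f ` Dom T"
  unfolding rr_def dir_image_Field Field_LL ..

lemma rr_iff: "x \<in> Dom T \<Longrightarrow> y \<in> Dom T \<Longrightarrow> ((f x, f y) \<in> rr) = lexle x y"
proof
  assume xy: "x \<in> Dom T" "y \<in> Dom T" and "(f x, f y) \<in> rr"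
  then obtain a b where ab: "f x = f a" "f y = f b" "(a, b) \<in> LL T" unfolding rr_def dir_image_def by blast
  then have "a \<in> Dom T" "b \<in> Dom T" "lexle a b" unfolding LL_def by auto
  with ab xy inj have "a = x" "b = y" unfolding inj_on_def by metis+
  then show "lexle x y" using \<open>lexle a b\<close> by simp
next
  assume "x \<in> Dom T" "y \<in> Dom T" "lexle x y"
  then show "(f x, f y) \<in> rr" unfolding rr_def dir_image_def LL_def by blast
qed

lemma rr_Field: "(a, b) \<in> rr \<Longrightarrow> (\<exists>x\<in>Dom T. a = f x) \<and> (\<exists>y\<in>Dom T. b = f y)"
  unfolding rr_def dir_image_def LL_def by blast

lemma sb_iff: "x \<in> Dom T \<Longrightarrow> y \<in> Dom T \<Longrightarrow> strict_below rr (f x) (f y) = (lexle x y \<and> x \<noteq> y)"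
  unfolding strict_below_def using rr_iff inj unfolding inj_on_def by metis

lemma sb_left: "strict_below rr g b \<Longrightarrow> \<exists>y\<in>Dom T. g = f y"
  unfolding strict_below_def using rr_Field by blast
lemma sb_right: "strict_below rr g b \<Longrightarrow> \<exists>y\<in>Dom T. b = f y"
  unfolding strict_below_def using rr_Field by blast

lemma Some_Dom: "G \<in> T \<Longrightarrow> Some (G, n) \<in> Dom T"
  unfolding Dom_def by blast
lemma None_Dom: "None \<in> Dom T"
  unfolding Dom_def by blast

lemma lexle_None_Some: "lexle y (Some a) \<Longrightarrow> \<exists>H m. y = Some (H, m)"
  by (cases y) auto

lemma Dom_Some: "Some (H, m) \<in> Dom T \<Longrightarrow> H \<in> T"
  unfolding Dom_def by blast

lemma lim_None: "limit_or_zero rr (f None)"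
  unfolding limit_or_zero_def
proof (intro conjI notI)
  show "f None \<in> Field rr" using Field_rr None_Dom by blast
  assume "\<exists>g. strict_below rr g (f None) \<and> \<not> (\<exists>e. strict_below rr g e \<and> strict_below rr e (f None))"
  then obtain g where g: "strict_below rr g (f None)"
    and ne: "\<not> (\<exists>e. strict_below rr g e \<and> strict_below rr e (f None))" by blast
  from sb_left[OF g] obtain y where y: "y \<in> Dom T" "g = f y" by blast
  have "y \<noteq> None"
  proof
    assume "y = None" then show False using g y unfolding strict_below_def by simp
  qed
  then obtain H m where yy: "y = Some (H, m)" by (metis not_None_eq surj_pair)
  have H: "H \<in> T" using y(1) yy Dom_Some by blast
  have "strict_below rr g (f (Some (H, Suc m)))" unfolding y(2) yy
    using sb_iff[OF Some_Dom[OF H] Some_Dom[OF H]] by simp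
  moreover have "strict_below rr (f (Some (H, Suc m))) (f None)"
    using sb_iff[OF Some_Dom[OF H] None_Dom] by simp
  ultimately show False using ne by blast
qed

lemma lim_zero: assumes G: "G \<in> T" shows "limit_or_zero rr (f (Some (G, 0)))"
  unfolding limit_or_zero_def
proof (intro conjI notI)
  show "f (Some (G, 0)) \<in> Field rr" using Field_rr Some_Dom[OF G] by blast
  assume "\<exists>g. strict_below rr g (f (Some (G, 0))) \<and> \<not> (\<exists>e. strict_below rr g e \<and> strict_below rr e (f (Some (G, 0))))"
  then obtain g where g: "strict_below rr g (f (Some (G, 0)))"
    and ne: "\<not> (\<exists>e. strict_below rr g e \<and> strict_below rr e (f (Some (G, 0))))" by blast
  from sb_left[OF g] obtain y where y: "y \<in> Dom T" "g = f y" by blast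
  have yl: "lexle y (Some (G, 0))" "y \<noteq> Some (G, 0)" using g sb_iff[OF y(1) Some_Dom[OF G]] y(2) by auto
  then obtain H m where yy: "y = Some (H, m)" using lexle_None_Some by blast
  have H: "H \<in> T" using y(1) yy Dom_Some by blast
  have "H \<subset> G" using yl unfolding yy by auto
  have "strict_below rr g (f (Some (H, Suc m)))" unfolding y(2) yy
    using sb_iff[OF Some_Dom[OF H] Some_Dom[OF H]] by simp
  moreover have "strict_below rr (f (Some (H, Suc m))) (f (Some (G, 0)))"
    using sb_iff[OF Some_Dom[OF H] Some_Dom[OF G]] \<open>H \<subset> G\<close> by simp
  ultimately show False using ne by blast
qed

lemma lim_suc: assumes G: "G \<in> T" shows "\<not> limit_or_zero rr (f (Some (G, Suc n)))"
  unfolding limit_or_zero_def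
proof (intro notI, elim conjE)
  assume ne: "\<not> (\<exists>g. strict_below rr g (f (Some (G, Suc n))) \<and>
     \<not> (\<exists>e. strict_below rr g e \<and> strict_below rr e (f (Some (G, Suc n)))))"
  have g: "strict_below rr (f (Some (G, n))) (f (Some (G, Suc n)))"
    using sb_iff[OF Some_Dom[OF G] Some_Dom[OF G]] by simp
  with ne obtain e where e: "strict_below rr (f (Some (G, n))) e" "strict_below rr e (f (Some (G, Suc n)))"
    by blast
  from sb_left[OF e(2)] obtain z where z: "z \<in> Dom T" "e = f z" by blast
  have z1: "lexle (Some (G, n)) z" "Some (G, n) \<noteq> z" using e(1) sb_iff[OF Some_Dom[OF G] z(1)] z(2) by auto
  have z2: "lexle z (Some (G, Suc n))" "z \<noteq> Some (G, Suc n)" using e(2) sb_iff[OF z(1) Some_Dom[OF G]] z(2) by auto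
  then obtain H k where zz: "z = Some (H, k)" using lexle_None_Some by blast
  have a: "G \<subset> H \<or> (G = H \<and> n \<le> k)" using z1(1) zz by simp
  have b: "H \<subset> G \<or> (H = G \<and> k \<le> Suc n)" using z2(1) zz by simp
  have "H = G"
  proof (rule ccontr)
    assume "H \<noteq> G"
    then have "G \<subset> H" "H \<subset> G" using a b by auto
    then show False by blast
  qed
  then show False using a b z1(2) z2(2) zz by auto
qed

lemma lim_iff: assumes x: "x \<in> Dom T"
  shows "limit_or_zero rr (f x) = (x = None \<or> (\<exists>G. x = Some (G, 0)))"
proof (cases x)
  case None then show ?thesis using lim_None by simp
next
  case (Some a)
  then obtain G n where xx: "x = Some (G, n)" by (metis surj_pair)
  have G: "G \<in> T" using x xx Dom_Some by blast
  show ?thesis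
  proof (cases n)
    case 0 then show ?thesis using lim_zero[OF G] xx by simp
  next
    case (Suc k) then show ?thesis using lim_suc[OF G, of k] xx by simp
  qed
qed

lemma fp_None: "finite_part rr (f None) = 0"
proof -
  have "{g. strict_below rr g (f None) \<and>
      (\<forall>d. strict_below rr g d \<and> (d, f None) \<in> rr \<longrightarrow> \<not> limit_or_zero rr d)} = {}"
  proof (rule equals0I)
    fix g assume "g \<in> {g. strict_below rr g (f None) \<and>
      (\<forall>d. strict_below rr g d \<and> (d, f None) \<in> rr \<longrightarrow> \<not> limit_or_zero rr d)}"
    then have g: "strict_below rr g (f None)"
      and h: "\<forall>d. strict_below rr g d \<and> (d, f None) \<in> rr \<longrightarrow> \<not> limit_or_zero rr d" by auto
    have "(f None, f None) \<in> rr" using rr_iff[OF None_Dom None_Dom] by simp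
    then show False using h g lim_None by blast
  qed
  then show ?thesis unfolding finite_part_def by (simp only: card.empty)
qed

lemma fp_Some: assumes G: "G \<in> T" shows "finite_part rr (f (Some (G, n))) = n"
proof -
  define b where "b = f (Some (G, n))"
  have eq: "{g. strict_below rr g b \<and>
      (\<forall>d. strict_below rr g d \<and> (d, b) \<in> rr \<longrightarrow> \<not> limit_or_zero rr d)}
      = (\<lambda>m. f (Some (G, m))) ` {..<n}" (is "?L = ?R")
  proof
    show "?L \<subseteq> ?R"
    proof
      fix g assume "g \<in> ?L"
      then have g: "strict_below rr g b"
        and h: "\<forall>d. strict_below rr g d \<and> (d, b) \<in> rr \<longrightarrow> \<not> limit_or_zero rr d" by auto
      from sb_left[OF g] obtain y where y: "y \<in> Dom T" "g = f y" by blast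
      have yl: "lexle y (Some (G, n))" "y \<noteq> Some (G, n)" using g sb_iff[OF y(1) Some_Dom[OF G]] y(2)
        unfolding b_def by auto
      then obtain H m where yy: "y = Some (H, m)" using lexle_None_Some by blast
      have H: "H \<in> T" using y(1) yy Dom_Some by blast
      have "\<not> H \<subset> G"
      proof
        assume HG: "H \<subset> G"
        have "strict_below rr g (f (Some (G, 0)))" unfolding y(2) yy
          using sb_iff[OF Some_Dom[OF H] Some_Dom[OF G]] HG by simp
        moreover have "(f (Some (G, 0)), b) \<in> rr" unfolding b_def
          using rr_iff[OF Some_Dom[OF G] Some_Dom[OF G]] by simp
        ultimately show False using h lim_zero[OF G] by blast
      qed
      then have "H = G" "m < n" using yl yy by auto
      then show "g \<in> ?R" using y(2) yy by blast
    qed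
    show "?R \<subseteq> ?L"
    proof
      fix g assume "g \<in> ?R"
      then obtain m where m: "m < n" "g = f (Some (G, m))" by blast
      have "strict_below rr g b" unfolding b_def m(2)
        using sb_iff[OF Some_Dom[OF G] Some_Dom[OF G]] m(1) by simp
      moreover have "\<not> limit_or_zero rr d" if d: "strict_below rr g d" "(d, b) \<in> rr" for d
      proof -
        from sb_right[OF d(1)] obtain z where z: "z \<in> Dom T" "d = f z" by blast
        have z1: "lexle (Some (G, m)) z" "Some (G, m) \<noteq> z"
          using d(1) sb_iff[OF Some_Dom[OF G] z(1)] z(2) m(2) by auto
        have z2: "lexle z (Some (G, n))" using d(2) rr_iff[OF z(1) Some_Dom[OF G]] z(2) b_def by simp
        then obtain H k where zz: "z = Some (H, k)" using lexle_None_Some by blast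
        have a: "G \<subset> H \<or> (G = H \<and> m \<le> k)" using z1(1) zz by simp
        have bb: "H \<subset> G \<or> (H = G \<and> k \<le> n)" using z2 zz by simp
        have "H = G"
        proof (rule ccontr)
          assume "H \<noteq> G"
          then have "G \<subset> H" "H \<subset> G" using a bb by auto
          then show False by blast
        qed
        then have "k \<noteq> 0" using a z1(2) zz by auto
        then show ?thesis using lim_iff[OF z(1)] z(2) zz by simp
      qed
      ultimately show "g \<in> ?L" by blast
    qed
  qed
  have "inj_on (\<lambda>m. f (Some (G, m))) {..<n}"
    using inj Some_Dom[OF G] unfolding inj_on_def by blast
  then have "card ?R = n" by (simp add: card_image)
  then show ?thesis unfolding finite_part_def b_def[symmetric] eq .
qed

end



definition Aof :: "'a topology \<Rightarrow> 'a set \<Rightarrow> ('a set \<times> nat) option \<Rightarrow> 'a set" where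
  "Aof E S x = (case x of None \<Rightarrow> {} | Some (G, n) \<Rightarrow> if n = 0 then G \<union> Nneg E S G else nxt E S G)"

lemma main_construct:
  assumes bp: "BP E S" and cb: "has_countable_basis E" and SX: "S \<subseteq> topspace E"
  shows "S \<in> D_countable_union E"
proof -
  define T where "T = tower E S"
  have lin: "\<And>G H. G \<in> T \<Longrightarrow> H \<in> T \<Longrightarrow> G \<subseteq> H \<or> H \<subseteq> G"
    unfolding T_def using tower_lin by blast
  have least: "\<And>Y. Y \<subseteq> T \<Longrightarrow> Y \<noteq> {} \<Longrightarrow> \<exists>H\<in>Y. \<forall>Z\<in>Y. H \<subseteq> Z"
    unfolding T_def using tower_least[OF bp] by blast
  have wo: "Well_order (LL T)" by (rule LL_wo[OF lin least])
  have cT: "countable T" unfolding T_def by (rule tower_countable[OF bp cb])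
  have "Dom T \<subseteq> insert None (Some ` (T \<times> UNIV))" unfolding Dom_def by auto
  moreover have "countable (insert None (Some ` (T \<times> (UNIV :: nat set))))" using cT by simp
  ultimately have "countable (Dom T)" using countable_subset by blast
  then obtain f :: "('a set \<times> nat) option \<Rightarrow> nat" where inj: "inj_on f (Dom T)" by (rule countableE)
  interpret enc T f by (unfold_locales) (rule inj)
  have wor: "Well_order rr" unfolding rr_def
    by (rule Well_order_dir_image[OF wo]) (simp add: Field_LL inj)
  define tp where "tp = f None"
  have code: "countable_ordinal_code rr tp" unfolding countable_ordinal_code_def
  proof (intro conjI ballI)
    show "Well_order rr" by (rule wor)
    show "tp \<in> Field rr" unfolding tp_def Field_rr using None_Dom by blast
    fix x assume "x \<in> Field rr"
    then obtain y where y: "y \<in> Dom T" "x = f y" unfolding Field_rr by blast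
    show "(x, tp) \<in> rr" unfolding tp_def y(2) using rr_iff[OF y(1) None_Dom] by simp
  qed
  define A where "A k = (if k \<in> f ` Dom T then Aof E S (inv_into (Dom T) f k) else {})" for k
  have Af: "A (f x) = Aof E S x" if "x \<in> Dom T" for x
    unfolding A_def using that inv_into_f_f[OF inj that] by simp
  have below_tp: "\<exists>G n. G \<in> T \<and> b = f (Some (G, n))" if b: "strict_below rr b tp" for b
  proof -
    from sb_left[OF b] obtain y where y: "y \<in> Dom T" "b = f y" by blast
    have "y \<noteq> None"
    proof
      assume "y = None" then show False using b y unfolding strict_below_def tp_def by simp
    qed
    then obtain G n where yy: "y = Some (G, n)" by (metis not_None_eq surj_pair)
    then show ?thesis using y Dom_Some by blast
  qed
  have GT_open: "openin E G" if "G \<in> T" for G using tower_open that unfolding T_def by blast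
  have nxt_open: "openin E (nxt E S G)" if "G \<in> T" for G
    using tower_open tw_nxt that unfolding T_def by blast
  have Aopen: "openin E (A b)" if b: "strict_below rr b tp" for b
  proof -
    from below_tp[OF b] obtain G n where G: "G \<in> T" "b = f (Some (G, n))" by blast
    have "A b = Aof E S (Some (G, n))" using G Af Some_Dom by simp
    then show ?thesis unfolding Aof_def using GT_open[OF G(1)] nxt_open[OF G(1)] Nneg_open[of E S G]
      by (auto intro: openin_Un)
  qed
  have par: "same_parity rr (f (Some (G, n))) tp = even n" if "G \<in> T" for G n
    unfolding same_parity_def tp_def fp_None fp_Some[OF that] by simp
  have "D_op rr tp A = S"
  proof
    show "D_op rr tp A \<subseteq> S"
    proof
      fix x assume "x \<in> D_op rr tp A"
      then obtain b where b: "strict_below rr b tp" "\<not> same_parity rr b tp" "x \<in> A b"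
        "\<And>g. strict_below rr g b \<Longrightarrow> x \<notin> A g" unfolding D_op_def by blast
      from below_tp[OF b(1)] obtain G n where G: "G \<in> T" "b = f (Some (G, n))" by blast
      have "odd n" using b(2) par[OF G(1)] G(2) by simp
      then have n0: "n \<noteq> 0" by (rule odd_pos[THEN gr_implies_not0])
      have "x \<in> nxt E S G" using b(3) G Af[OF Some_Dom[OF G(1)]] n0 unfolding Aof_def by simp
      moreover have "strict_below rr (f (Some (G, 0))) b"
        unfolding G(2) using sb_iff[OF Some_Dom[OF G(1)] Some_Dom[OF G(1)]] n0 by simp
      then have "x \<notin> G \<union> Nneg E S G" using b(4) Af[OF Some_Dom[OF G(1)]] unfolding Aof_def by force
      ultimately have "x \<in> Npos E S G" unfolding nxt_def by blast
      then obtain U where U: "openin E U" "(topspace E - G) \<inter> U \<subseteq> S" "x \<in> U"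
        unfolding Npos_def by blast
      have "x \<in> topspace E" using U openin_subset by blast
      then show "x \<in> S" using U \<open>x \<notin> G \<union> Nneg E S G\<close> by blast
    qed
    show "S \<subseteq> D_op rr tp A"
    proof
      fix x assume xS: "x \<in> S"
      then have xX: "x \<in> topspace E" using SX by blast
      define Gx where "Gx = \<Union>{G \<in> T. x \<notin> G}"
      have GxT: "Gx \<in> T" unfolding Gx_def T_def by (rule tw_Un) blast
      have xG: "x \<notin> Gx" unfolding Gx_def by blast
      have xn: "x \<in> nxt E S Gx"
      proof (rule ccontr)
        assume "x \<notin> nxt E S Gx"
        moreover have "nxt E S Gx \<in> T" using GxT unfolding T_def by (rule tw_nxt)
        ultimately have "nxt E S Gx \<subseteq> Gx" unfolding Gx_def by blast
        then have "nxt E S Gx = Gx" using nxt_sup[of Gx E S] by blast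
        from nxt_fix[OF bp GT_open[OF GxT] this] show False using xX xG by blast
      qed
      define b where "b = f (Some (Gx, 1))"
      have bt: "strict_below rr b tp" unfolding b_def tp_def
        using sb_iff[OF Some_Dom[OF GxT] None_Dom] by simp
      have bp2: "\<not> same_parity rr b tp" unfolding b_def using par[OF GxT, of 1] by simp
      have xb: "x \<in> A b" unfolding b_def using Af[OF Some_Dom[OF GxT]] xn unfolding Aof_def by simp
      have xg: "x \<notin> A g" if g: "strict_below rr g b" for g
      proof -
        from sb_left[OF g] obtain y where y: "y \<in> Dom T" "g = f y" by blast
        have yl: "lexle y (Some (Gx, 1))" "y \<noteq> Some (Gx, 1)"
          using g sb_iff[OF y(1) Some_Dom[OF GxT]] y(2) unfolding b_def by auto
        then obtain H m where yy: "y = Some (H, m)" using lexle_None_Some by blast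
        have H: "H \<in> T" using y(1) yy Dom_Some by blast
        have Ag: "A g = Aof E S (Some (H, m))" using Af[OF y(1)] y(2) yy by simp
        have "H \<subset> Gx \<or> (H = Gx \<and> m = 0)" using yl yy by auto
        then show ?thesis
        proof
          assume HG: "H \<subset> Gx"
          have "nxt E S H \<subseteq> Gx" using tower_key[of Gx E S H] GxT H HG unfolding T_def by blast
          moreover have "A g \<subseteq> nxt E S H" unfolding Ag Aof_def nxt_def by auto
          ultimately show ?thesis using xG by blast
        next
          assume HG: "H = Gx \<and> m = 0"
          then have Ag2: "A g = Gx \<union> Nneg E S Gx" unfolding Ag Aof_def by simp
          show ?thesis
          proof
            assume "x \<in> A g"
            then have "x \<in> Nneg E S Gx" using Ag2 xG by blast
            then obtain U where U: "openin E U" "(topspace E - Gx) \<inter> U \<inter> S = {}" "x \<in> U"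
              unfolding Nneg_def by blast
            then show False using xX xG xS by blast
          qed
        qed
      qed
      show "x \<in> D_op rr tp A" unfolding D_op_def using bt bp2 xb xg by blast
    qed
  qed
  then have "S \<in> D_class E rr tp" unfolding D_class_def using Aopen by blast
  then show ?thesis unfolding D_countable_union_def using code by blast
qed

theorem corollary3p16:
  fixes E :: "'a topology"
  assumes "hereditary_approx_space E"
    and "has_countable_basis E"
  shows "D_countable_union E = {S. delta02 E S}"
proof
  show "D_countable_union E \<subseteq> {S. delta02 E S}" by (rule D_union_sub)
  show "{S. delta02 E S} \<subseteq> D_countable_union E"
  proof
    fix S assume "S \<in> {S. delta02 E S}"
    then have D: "delta02 E S" by simp
    from assms(1) obtain B R where H: "hereditary_approx_rel E B R"
      unfolding hereditary_approx_space_def by blast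
    have "S \<subseteq> topspace E" using D unfolding delta02_def pi02_def by blast
    then show "S \<in> D_countable_union E" using main_construct[OF BP_intro[OF H D] assms(2)] by blast
  qed
qed


end
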